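(* Let $n\in\mathbb{N}$, let $p$ be a prime with $p\nmid n$, and let $q\ge1$ be an integer. Then \[ \frac{M_q(pn)}{\tau(pn)}\le\frac{M_q(n)}{\tau(n)}+\frac{1}{\tau(n)}\sum_{\substack{a+b=q\\ 1\le b\le q/2}}\binom{q}{a}\int_{\mathbb{R}}\Delta(n;u)^a\,\Delta(n;u-\log p)^b\,du, \] where the sum runs over integers $a,b$. Moreover, $M_q(pn)/\tau(pn)\ge M_q(n)/\tau(n)$.
   Context: For $n\in\mathbb{N}$ and $u\in\mathbb{R}$, $\Delta(n;u)=\#\{d\mid n: e^u<d\le e^{u+1}\}$; $M_q(n)=\int_{\mathbb{R}}\Delta(n;u)^q\,du$; $\tau(n)$ is the number of divisors of $n$. *)

theory Defs
  imports "HOL-Analysis.Analysis"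
begin

definition Delta :: "nat \<Rightarrow> real \<Rightarrow> nat" where
  "Delta n u = card {d. d dvd n \<and> exp u < real d \<and> real d \<le> exp (u + 1)}"

definition M :: "nat \<Rightarrow> nat \<Rightarrow> real" where
  "M q n = (\<integral>u. real (Delta n u) ^ q \<partial>lborel)"

definition tau :: "nat \<Rightarrow> nat" where
  "tau n = card {d. d dvd n}"

end

theory Submission
  imports Defs
begin


lemma Delta_rep:
  assumes "n > 0"
  shows "real (Delta n u) = (\<Sum>d\<in>{d. d dvd n}. indicator {ln (real d) - 1..<ln (real d)} u)"
proof -
  have fin: "finite {d. d dvd n}" using assms by simp
  have eq: "{d. d dvd n \<and> exp u < real d \<and> real d \<le> exp (u + 1)} =
        {d\<in>{d. d dvd n}. u \<in> {ln (real d) - 1..<ln (real d)}}"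
  proof (intro set_eqI iffI)
    fix d assume "d \<in> {d. d dvd n \<and> exp u < real d \<and> real d \<le> exp (u + 1)}"
    then have h: "d dvd n" "exp u < real d" "real d \<le> exp (u+1)" by auto
    then have "d > 0" using assms by (metis dvd_0_left_iff gr0I)
    then show "d \<in> {d\<in>{d. d dvd n}. u \<in> {ln (real d) - 1..<ln (real d)}}"
    proof -
      have "ln (exp u) < ln (real d)" using h(2) \<open>d>0\<close> by (subst ln_less_cancel_iff) auto
      moreover have "ln (real d) \<le> ln (exp (u+1))" using h(3) \<open>d>0\<close> by (subst ln_le_cancel_iff) auto
      ultimately show ?thesis using h(1) by auto
    qed
  next
    fix d assume "d \<in> {d\<in>{d. d dvd n}. u \<in> {ln (real d) - 1..<ln (real d)}}"
    then have h: "d dvd n" "ln (real d) - 1 \<le> u" "u < ln (real d)" by auto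
    then have "d > 0" using assms by (metis dvd_0_left_iff gr0I)
    then show "d \<in> {d. d dvd n \<and> exp u < real d \<and> real d \<le> exp (u + 1)}"
    proof -
      have "exp u < exp (ln (real d))" using h(3) by simp
      moreover have "exp (ln (real d)) \<le> exp (u+1)" using h(2) by simp
      ultimately show ?thesis using h(1) \<open>d>0\<close> by auto
    qed
  qed
  have "real (Delta n u) = real (card {d\<in>{d. d dvd n}. u \<in> {ln (real d) - 1..<ln (real d)}})"
    unfolding Delta_def eq ..
  also have "\<dots> = (\<Sum>d\<in>{d\<in>{d. d dvd n}. u \<in> {ln (real d) - 1..<ln (real d)}}. 1)" by simp
  also have "\<dots> = (\<Sum>d\<in>{d. d dvd n}. indicator {ln (real d) - 1..<ln (real d)} u)"
    using sum.inter_filter[OF fin, of "\<lambda>_. 1::real"] by (simp add: indicator_def of_bool_def)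
  finally show ?thesis .
qed



lemma divisors_pn:
  fixes p n :: nat
  assumes "prime p" "\<not> p dvd n" "n > 0"
  shows "card {d. d dvd p*n \<and> P d} = card {d. d dvd n \<and> P d} + card {d. d dvd n \<and> P (p*d)}"
proof -
  have p0: "p > 0" using assms prime_gt_0_nat by blast
  have split: "{d. d dvd p*n \<and> P d} = {d. d dvd n \<and> P d} \<union> (\<lambda>d. p*d) ` {d. d dvd n \<and> P (p*d)}"
  proof (intro set_eqI iffI)
    fix d assume "d \<in> {d. d dvd p*n \<and> P d}"
    then have h: "d dvd p*n" "P d" by auto
    show "d \<in> {d. d dvd n \<and> P d} \<union> (\<lambda>d. p*d) ` {d. d dvd n \<and> P (p*d)}"
    proof (cases "p dvd d")
      case True
      then obtain e where e: "d = p*e" by blast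
      then have "e dvd n" using h(1) p0 by auto
      then show ?thesis using e h(2) by auto
    next
      case False
      then have "coprime d p" using assms(1) by (metis coprime_commute prime_imp_coprime)
      then have "d dvd n" using h(1) by (metis coprime_dvd_mult_right_iff)
      then show ?thesis using h by auto
    qed
  next
    fix d assume "d \<in> {d. d dvd n \<and> P d} \<union> (\<lambda>d. p*d) ` {d. d dvd n \<and> P (p*d)}"
    then show "d \<in> {d. d dvd p*n \<and> P d}" by auto
  qed
  have disj: "{d. d dvd n \<and> P d} \<inter> (\<lambda>d. p*d) ` {d. d dvd n \<and> P (p*d)} = {}"
    using assms(2) by auto
  have fin1: "finite {d. d dvd n \<and> P d}" using assms(3) by simp
  have fin2: "finite {d. d dvd n \<and> P (p*d)}" using assms(3) by simp
  have inj: "inj_on (\<lambda>d. p*d) {d. d dvd n \<and> P (p*d)}" using p0 by (auto simp: inj_on_def)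
  show ?thesis unfolding split
    by (subst card_Un_disjoint) (use fin1 fin2 disj inj card_image in auto)
qed

lemma tau_pn:
  fixes p n :: nat
  assumes "prime p" "\<not> p dvd n" "n > 0"
  shows "tau (p*n) = 2 * tau n"
  using divisors_pn[OF assms, of "\<lambda>_. True"] by (simp add: tau_def)

lemma Delta_pn:
  fixes p n :: nat
  assumes "prime p" "\<not> p dvd n" "n > 0"
  shows "Delta (p*n) u = Delta n u + Delta n (u - ln (real p))"
proof -
  have p0: "real p > 0" using assms prime_gt_0_nat by simp
  have "\<And>d. (exp u < real (p*d) \<and> real (p*d) \<le> exp (u + 1)) \<longleftrightarrow>
         (exp (u - ln (real p)) < real d \<and> real d \<le> exp (u - ln (real p) + 1))"
  proof -
    fix d
    have a: "exp (u - ln (real p)) = exp u / real p" using p0 by (simp add: exp_diff)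
    have b: "exp (u - ln (real p) + 1) = exp (u+1) / real p" using p0 by (simp add: exp_diff exp_add)
    show "?thesis d" unfolding a b using p0 by (simp add: field_simps)
  qed
  then show ?thesis unfolding Delta_def using divisors_pn[OF assms] by simp
qed



lemma Delta_meas:
  assumes "n > 0"
  shows "(\<lambda>u. real (Delta n u)) \<in> borel_measurable borel"
proof -
  have "(\<lambda>u. real (Delta n u)) = (\<lambda>u. \<Sum>d\<in>{d. d dvd n}. indicator {ln (real d) - 1..<ln (real d)} u)"
    using Delta_rep[OF assms] by auto
  moreover have "(\<lambda>u. \<Sum>d\<in>{d. d dvd n}. indicator {ln (real d) - 1..<ln (real d)} u :: real) \<in> borel_measurable borel"
    by measurable
  ultimately show ?thesis by simp
qed

lemma Delta_zero:
  assumes "n > 0" "u < -1 \<or> u \<ge> ln (real n)"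
  shows "Delta n u = 0"
proof -
  have "\<And>d. d dvd n \<Longrightarrow> indicator {ln (real d) - 1..<ln (real d)} u = (0::real)"
  proof -
    fix d assume d: "d dvd n"
    then have "d \<ge> 1" "d \<le> n" using assms(1) by (auto simp: dvd_imp_le Suc_le_eq intro: gr0I)
    then have "ln (real d) \<ge> 0" "ln (real d) \<le> ln (real n)" by auto
    then show "indicator {ln (real d) - 1..<ln (real d)} u = (0::real)" using assms(2) by (auto simp: indicator_def)
  qed
  then have "real (Delta n u) = 0" using Delta_rep[OF assms(1)] by simp
  then show ?thesis by simp
qed

lemma Delta_le:
  assumes "n > 0"
  shows "Delta n u \<le> tau n"
  unfolding Delta_def tau_def using assms by (intro card_mono) auto

lemma integrable_prod:
  assumes "n > 0" "a + b \<ge> 1"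
  shows "integrable lborel (\<lambda>u. real (Delta n u)^a * real (Delta n (u - c))^b)"
proof -
  let ?I = "{-1 - \<bar>c\<bar> .. ln (real n) + \<bar>c\<bar>}"
  have i: "integrable lborel (\<lambda>u. indicator ?I u *\<^sub>R (real (tau n) ^ (a+b)))"
    by (intro integrable_indicator) (auto simp: emeasure_lborel_Icc_eq)
  have m: "(\<lambda>u. real (Delta n u)) \<in> borel_measurable borel" by (rule Delta_meas[OF assms(1)])
  have m2: "(\<lambda>u. real (Delta n (u - c))) \<in> borel_measurable borel"
    using measurable_compose[OF _ m, of "\<lambda>u. u - c"] by measurable
  have mm: "(\<lambda>u. real (Delta n u)^a * real (Delta n (u - c))^b) \<in> borel_measurable lborel"
    using m m2 by measurable
  have ae: "AE u in lborel. norm (real (Delta n u)^a * real (Delta n (u - c))^b)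
          \<le> norm (indicator ?I u *\<^sub>R (real (tau n) ^ (a+b)))"
  proof (intro AE_I2)
    fix u
    show "norm (real (Delta n u)^a * real (Delta n (u - c))^b)
          \<le> norm (indicator ?I u *\<^sub>R (real (tau n) ^ (a+b)) :: real)"
    proof (cases "u \<in> ?I")
      case True
      have "real (Delta n u)^a * real (Delta n (u - c))^b \<le> real (tau n)^a * real (tau n)^b"
        using Delta_le[OF assms(1)] by (intro mult_mono power_mono) auto
      then show ?thesis using True by (simp add: power_add)
    next
      case False
      then have "u < -1 \<or> u \<ge> ln (real n)" "u - c < -1 \<or> u - c \<ge> ln (real n)" by auto
      then have "Delta n u = 0" "Delta n (u - c) = 0" using Delta_zero[OF assms(1)] by auto
      then show ?thesis using assms(2) False by (cases a; cases b) auto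
    qed
  qed
  show ?thesis by (rule Bochner_Integration.integrable_bound[OF i mm ae])
qed



definition badset :: "nat \<Rightarrow> real set" where
  "badset n = (\<lambda>d. ln (real d)) ` {d. d dvd n} \<union> (\<lambda>d. ln (real d) - 1) ` {d. d dvd n}"

lemma finite_badset: "n > 0 \<Longrightarrow> finite (badset n)"
  unfolding badset_def by simp

lemma Delta_refl:
  assumes "n > 0" "v \<notin> badset n"
  shows "Delta n (ln (real n) - 1 - v) = Delta n v"
proof -
  let ?D = "{d. d dvd n}"
  have "real (Delta n (ln (real n) - 1 - v)) =
     (\<Sum>d\<in>?D. indicator {ln (real d) - 1..<ln (real d)} (ln (real n) - 1 - v))"
    by (rule Delta_rep[OF assms(1)])
  also have "\<dots> = (\<Sum>d\<in>?D. indicator {ln (real d) - 1..<ln (real d)} v)"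
  proof (rule sum.reindex_bij_witness[where i="\<lambda>d. n div d" and j="\<lambda>d. n div d"])
    fix d assume d: "d \<in> ?D"
    then show "n div (n div d) = d" using assms(1)
      by (metis div_div_eq_right dvd_div_mult_self mem_Collect_eq nonzero_mult_div_cancel_left dvd_mult_div_cancel
          div_mult_self1_is_m dvd_div_eq_0_iff gr_implies_not0 dvd_def)
    show "n div d \<in> ?D" using d by auto
    have d0: "d > 0" using d assms(1) by (auto intro: gr0I)
    have e0: "n div d > 0" using d assms(1) by (auto intro!: gr0I simp: dvd_div_eq_0_iff)
    have ln_eq: "ln (real (n div d)) = ln (real n) - ln (real d)"
    proof -
      have "real (n div d) = real n / real d" using d by (simp add: real_of_nat_div)
      then show ?thesis using d0 assms(1) by (simp add: ln_div)
    qed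
    have "v \<noteq> ln (real (n div d))" "v \<noteq> ln (real (n div d)) - 1"
      using assms(2) \<open>n div d \<in> ?D\<close> unfolding badset_def by blast+
    then show "indicator {ln (real (n div d)) - 1..<ln (real (n div d))} v =
          (indicator {ln (real d) - 1..<ln (real d)} (ln (real n) - 1 - v) :: real)"
      unfolding ln_eq by (auto simp: indicator_def)
  next
    fix d assume d: "d \<in> ?D"
    then show "n div (n div d) = d" using assms(1)
      by (metis div_div_eq_right dvd_div_mult_self mem_Collect_eq nonzero_mult_div_cancel_left dvd_mult_div_cancel
          div_mult_self1_is_m dvd_div_eq_0_iff gr_implies_not0 dvd_def)
    show "n div d \<in> ?D" using d by auto
  qed
  also have "\<dots> = real (Delta n v)" by (rule Delta_rep[OF assms(1), symmetric])
  finally show ?thesis by simp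
qed



lemma Delta_meas_aff:
  assumes "n > 0"
  shows "(\<lambda>u. real (Delta n (\<alpha> + \<beta> * u))) \<in> borel_measurable borel"
  using measurable_compose[OF _ Delta_meas[OF assms], of "\<lambda>u. \<alpha> + \<beta> * u"] by measurable

lemma I_sym:
  assumes "n > 0"
  shows "(\<integral>u. real (Delta n u)^a * real (Delta n (u - c))^b \<partial>lborel) =
         (\<integral>u. real (Delta n u)^b * real (Delta n (u - c))^a \<partial>lborel)"
proof -
  define t where "t = ln (real n) - 1 + c"
  have "(\<integral>u. real (Delta n u)^a * real (Delta n (u - c))^b \<partial>lborel) =
     \<bar>-1\<bar> *\<^sub>R (\<integral>x. real (Delta n (t + (-1) * x))^a * real (Delta n (t + (-1) * x - c))^b \<partial>lborel)"
    by (rule lborel_integral_real_affine) simp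
  also have "\<dots> = (\<integral>x. real (Delta n (t + (-1) * x))^a * real (Delta n ((t - c) + (-1) * x))^b \<partial>lborel)"
    by (simp add: algebra_simps)
  also have "\<dots> = (\<integral>x. real (Delta n (0 + 1 * x))^b * real (Delta n ((-c) + 1 * x))^a \<partial>lborel)"
  proof (rule integral_cong_AE)
    show "(\<lambda>x. real (Delta n (t + (-1) * x))^a * real (Delta n ((t - c) + (-1) * x))^b) \<in> borel_measurable lborel"
      using Delta_meas_aff[OF assms, of t "-1"] Delta_meas_aff[OF assms, of "t - c" "-1"] by measurable
    show "(\<lambda>x. real (Delta n (0 + 1 * x))^b * real (Delta n ((-c) + 1 * x))^a) \<in> borel_measurable lborel"
      using Delta_meas_aff[OF assms, of 0 1] Delta_meas_aff[OF assms, of "-c" 1] by measurable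
    have fin: "finite (badset n \<union> (\<lambda>w. w + c) ` badset n)" using finite_badset[OF assms] by simp
    show "AE x in lborel. real (Delta n (t + (-1) * x))^a * real (Delta n ((t - c) + (-1) * x))^b =
        real (Delta n (0 + 1 * x))^b * real (Delta n ((-c) + 1 * x))^a"
    proof (rule AE_mp[OF AE_not_in[OF finite_imp_null_set_lborel[OF fin]]], intro AE_I2 impI)
      fix x assume x: "x \<notin> badset n \<union> (\<lambda>w. w + c) ` badset n"
      then have x1: "x \<notin> badset n" and x2: "x - c \<notin> badset n" by (auto simp: image_iff)
      have "Delta n (t + (-1) * x) = Delta n (ln (real n) - 1 - (x - c))" by (simp add: t_def algebra_simps)
      also have "\<dots> = Delta n (x - c)" by (rule Delta_refl[OF assms x2])
      finally have e1: "Delta n (t + (-1) * x) = Delta n (-c + 1 * x)" by simp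
      have "Delta n ((t - c) + (-1) * x) = Delta n (ln (real n) - 1 - x)" by (simp add: t_def algebra_simps)
      also have "\<dots> = Delta n x" by (rule Delta_refl[OF assms x1])
      finally have e2: "Delta n ((t - c) + (-1) * x) = Delta n (0 + 1 * x)" by simp
      show "real (Delta n (t + (-1) * x))^a * real (Delta n ((t - c) + (-1) * x))^b =
        real (Delta n (0 + 1 * x))^b * real (Delta n ((-c) + 1 * x))^a"
        unfolding e1 e2 by (simp add: mult.commute)
    qed
  qed
  also have "\<dots> = (\<integral>u. real (Delta n u)^b * real (Delta n (u - c))^a \<partial>lborel)"
    by simp
  finally show ?thesis .
qed



lemma comb:
  fixes g :: "nat \<Rightarrow> real"
  assumes nn: "\<And>b. b \<le> q \<Longrightarrow> g b \<ge> 0" and sy: "\<And>b. b \<le> q \<Longrightarrow> g (q - b) = g b" and q: "q \<ge> 1"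
  shows "2 * g 0 \<le> (\<Sum>b\<le>q. g b) \<and> (\<Sum>b\<le>q. g b) \<le> 2 * g 0 + 2 * (\<Sum>b\<in>{b. 1 \<le> b \<and> 2 * b \<le> q}. g b)"
proof
  have "g 0 + g q = (\<Sum>b\<in>{0,q}. g b)" using q by simp
  also have "\<dots> \<le> (\<Sum>b\<le>q. g b)" by (rule sum_mono2) (use nn in auto)
  finally show "2 * g 0 \<le> (\<Sum>b\<le>q. g b)" using sy[of q] by simp
next
  let ?L = "{b. b \<le> q \<and> 2 * b \<le> q}" and ?R = "{b. b \<le> q \<and> q \<le> 2 * b}"
  have U: "{..q} = ?L \<union> ?R" by auto
  have "(\<Sum>b\<le>q. g b) = sum g ?L + sum g ?R - sum g (?L \<inter> ?R)"
    unfolding U by (rule sum_Un) auto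
  also have "\<dots> \<le> sum g ?L + sum g ?R"
    using nn by (auto intro!: sum_nonneg)
  also have "sum g ?R = sum g ?L"
    by (rule sum.reindex_bij_witness[where i="\<lambda>b. q - b" and j="\<lambda>b. q - b"]) (auto simp: sy)
  also have "?L = insert 0 {b. 1 \<le> b \<and> 2 * b \<le> q}" by auto
  also have "sum g (insert 0 {b. 1 \<le> b \<and> 2 * b \<le> q}) = g 0 + (\<Sum>b\<in>{b. 1 \<le> b \<and> 2 * b \<le> q}. g b)"
    by (rule sum.insert) (auto intro: finite_subset[of _ "{..q}"])
  finally show "(\<Sum>b\<le>q. g b) \<le> 2 * g 0 + 2 * (\<Sum>b\<in>{b. 1 \<le> b \<and> 2 * b \<le> q}. g b)" by simp
qed



theorem mainTheorem10:
  fixes n p q :: nat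
  assumes "prime p" and "\<not> p dvd n" and "q \<ge> 1"
  shows "(M q (p * n) / real (tau (p * n)) \<le>
           M q n / real (tau n)
           + (1 / real (tau n)) *
             (\<Sum>b\<in>{b. 1 \<le> b \<and> 2 * b \<le> q}.
                real (q choose (q - b)) *
                (\<integral>u. real (Delta n u) ^ (q - b) * real (Delta n (u - ln (real p))) ^ b \<partial>lborel))) \<and>
         M q (p * n) / real (tau (p * n)) \<ge> M q n / real (tau n)"
proof (cases "n = 0")
  case True
  have "tau 0 = 0" unfolding tau_def by (simp add: infinite_UNIV_nat)
  then show ?thesis using True by simp
next
  case False
  then have n0: "n > 0" by simp
  define c where "c = ln (real p)"
  define J where "J k = (\<integral>u. real (Delta n u) ^ k * real (Delta n (u - c)) ^ (q - k) \<partial>lborel)" for k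
  define g where "g b = real (q choose (q - b)) * J (q - b)" for b
  have T0: "real (tau n) > 0"
    using n0 unfolding tau_def by (auto simp: card_gt_0_iff intro!: exI[of _ 1])
  have tpn: "real (tau (p * n)) = 2 * real (tau n)" using tau_pn[OF assms(1,2) n0] by simp
  have "M q (p * n) = (\<integral>u. (real (Delta n u) + real (Delta n (u - c))) ^ q \<partial>lborel)"
    unfolding M_def c_def using Delta_pn[OF assms(1,2) n0] by simp
  also have "\<dots> = (\<integral>u. (\<Sum>k\<le>q. real (q choose k) * (real (Delta n u) ^ k * real (Delta n (u - c)) ^ (q - k))) \<partial>lborel)"
    by (simp add: binomial_ring mult.assoc)
  also have "\<dots> = (\<Sum>k\<le>q. real (q choose k) * J k)"
  proof -
    have "\<And>k. k \<in> {..q} \<Longrightarrow> integrable lborel (\<lambda>u. real (q choose k) * (real (Delta n u) ^ k * real (Delta n (u - c)) ^ (q - k)))"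
    proof -
      fix k assume "k \<in> {..q}"
      then have "k + (q - k) \<ge> 1" using assms(3) by simp
      then show "integrable lborel (\<lambda>u. real (q choose k) * (real (Delta n u) ^ k * real (Delta n (u - c)) ^ (q - k)))"
        by (intro integrable_mult_right integrable_prod[OF n0])
    qed
    from Bochner_Integration.integral_sum[where I="{..q}" and f="\<lambda>k u. real (q choose k) * (real (Delta n u) ^ k * real (Delta n (u - c)) ^ (q - k))", OF this]
    show ?thesis by (simp add: J_def)
  qed
  also have "\<dots> = (\<Sum>b\<le>q. g b)"
    unfolding g_def
    by (rule sum.reindex_bij_witness[where i="\<lambda>b. q - b" and j="\<lambda>b. q - b"]) auto
  finally have Mpn: "M q (p * n) = (\<Sum>b\<le>q. g b)" .
  have Mn: "M q n = g 0" unfolding g_def J_def M_def by simp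
  have Jsym: "J (q - b) = J b" if "b \<le> q" for b
    unfolding J_def using I_sym[OF n0, of b c "q - b"] that by simp
  have nn: "g b \<ge> 0" for b
    unfolding g_def J_def by (intro mult_nonneg_nonneg integral_nonneg_AE) auto
  have sy: "g (q - b) = g b" if "b \<le> q" for b
    unfolding g_def using that Jsym[OF that] binomial_symmetric[OF that] by simp
  have gS: "(\<Sum>b\<in>{b. 1 \<le> b \<and> 2 * b \<le> q}.
                real (q choose (q - b)) *
                (\<integral>u. real (Delta n u) ^ (q - b) * real (Delta n (u - ln (real p))) ^ b \<partial>lborel))
         = (\<Sum>b\<in>{b. 1 \<le> b \<and> 2 * b \<le> q}. g b)"
    unfolding g_def J_def c_def by (intro sum.cong) auto
  from comb[of q g, OF nn sy assms(3)] have C: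
    "2 * g 0 \<le> (\<Sum>b\<le>q. g b)"
    "(\<Sum>b\<le>q. g b) \<le> 2 * g 0 + 2 * (\<Sum>b\<in>{b. 1 \<le> b \<and> 2 * b \<le> q}. g b)" by auto
  show ?thesis unfolding gS Mpn Mn tpn using C T0
    by (auto simp: field_simps)
qed


end
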